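(* Let $T,S$ be two causal teams over $\sigma$ with $T\approx S$, or two generalized causal teams over $\sigma$ with $T\approx S$. Then for every formula $\varphi$ of $\mathcal{CO}[\sigma]$, $\mathcal{CO}_{\sqcup}[\sigma]$ or $\mathcal{COD}[\sigma]$, we have $T\models\varphi$ if and only if $S\models\varphi$ (with $\models^c$ for causal teams, $\models^g$ for generalized causal teams).
   Context: A signature $\sigma=(\mathrm{Dom},\mathrm{Ran})$: $\mathrm{Dom}$ nonempty finite set of variables, each $X$ with nonempty finite range $\mathrm{Ran}(X)$. $\mathbf X=\mathbf x$ abbreviates $X_1=x_1\wedge\dots\wedge X_n=x_n$ ($\mathbf x\in\mathrm{Ran}(\mathbf X)=\prod_i\mathrm{Ran}(X_i)$); inconsistent if it contains $X=x,X=x'$ with $x\ne x'$. Languages: $\mathcal{CO}[\sigma]$: $\alpha::=X=x\mid\neg\alpha\mid\alpha\wedge\alpha\mid\alpha\vee\alpha\mid\mathbf X=\mathbf x\;\Box\!\!\rightarrow\alpha$; $\mathcal{CO}_{\sqcup}[\sigma]$: $\varphi::=X=x\mid\neg\alpha\mid\varphi\wedge\varphi\mid\varphi\vee\varphi\mid\varphi\sqcup\varphi\mid\mathbf X=\mathbf x\;\Box\!\!\rightarrow\varphi$; $\mathcal{COD}[\sigma]$: $\varphi::=X=x\mid{=}(\mathbf X;Y)\mid\neg\alpha\mid\varphi\wedge\varphi\mid\varphi\vee\varphi\mid\mathbf X=\mathbf x\;\Box\!\!\rightarrow\varphi$ (always $\alpha\in\mathcal{CO}[\sigma]$). Assignments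 $s$ ($s(X)\in\mathrm{Ran}(X)$) form $\mathbb A_\sigma$. A system of functions $\mathcal F$ gives for each $V\in\mathrm{En}(\mathcal F)\subseteq\mathrm{Dom}$ parents $PA^{\mathcal F}_V\subseteq\mathrm{Dom}\setminus\{V\}$ and $\mathcal F_V:\mathrm{Ran}(PA^{\mathcal F}_V)\to\mathrm{Ran}(V)$; $\mathrm{Ex}(\mathcal F)=\mathrm{Dom}\setminus\mathrm{En}(\mathcal F)$; only recursive (acyclic parent graph) systems, forming $\mathbb F_\sigma$. $s$ compatible with $\mathcal F$: $s(V)=\mathcal F_V(s(PA^{\mathcal F}_V))$ for $V\in\mathrm{En}(\mathcal F)$; $\mathbb S_\sigma$ the set of compatible pairs. For consistent $\mathbf X=\mathbf x$: $\mathcal F_{\mathbf X=\mathbf x}$ restricts $\mathcal F$ to $\mathrm{En}(\mathcal F)\setminus\mathbf X$; $s^{\mathcal F}_{\mathbf X=\mathbf x}$: $X_i\mapsto x_i$, $V\mapsto s(V)$ on $\mathrm{Ex}(\mathcal F)\setminus\mathbf X$, $V\mapsto\mathcal F_V(s^{\mathcal F}_{\mathbf X=\mathbf x}(PA^{\mathcal F}_V))$ on $\mathrm{En}(\mathcal F)\setminus\mathbf X$. Causal team $T=(T^-,\mathcal F)$: $T^-$ a set of assignments compatible with $\mathcal F$; empty team components identified as $\emptyset$; causal subteams $(S^-,\mathcal F)$ with $S^-\subseteq T^-$; $T_{\mathbf X=\mathbf x}=(\{s^{\mathcal F}_{\mathbf X=\mathbf x}:s\in T^-\},\mathcal F_{\mathbf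 X=\mathbf x})$. $\models^c$: $T\models X=x$ iff all $s\in T^-$ have $s(X)=x$; $T\models{=}(\mathbf X;Y)$ iff $s(\mathbf X)=s'(\mathbf X)$ implies $s(Y)=s'(Y)$ for $s,s'\in T^-$; $T\models\neg\alpha$ iff $(\{s\},\mathcal F)\not\models\alpha$ for all $s\in T^-$; $\wedge$ classical; $T\models\varphi\vee\psi$ iff there are causal subteams $T_1,T_2$ with $T_1^-\cup T_2^-=T^-$, $T_1\models\varphi$, $T_2\models\psi$; $T\models\varphi\sqcup\psi$ iff $T\models\varphi$ or $T\models\psi$; $T\models\mathbf X=\mathbf x\;\Box\!\!\rightarrow\varphi$ iff $\mathbf X=\mathbf x$ inconsistent or $T_{\mathbf X=\mathbf x}\models\varphi$. Generalized causal team: $T\subseteq\mathbb S_\sigma$, $T^-=\{s:(s,\mathcal F)\in T\}$, $T_{\mathbf X=\mathbf x}=\{(s^{\mathcal F}_{\mathbf X=\mathbf x},\mathcal F_{\mathbf X=\mathbf x}):(s,\mathcal F)\in T\}$; $\models^g$: same clauses but $T\models\neg\alpha$ iff $\{(s,\mathcal F)\}\not\models\alpha$ for all $(s,\mathcal F)\in T$, and $T\models\varphi\vee\psi$ iff $T=T_1\cup T_2$, $T_1\models\varphi$, $T_2\models\psi$. Equivalence: $\mathrm{Cn}(\mathcal F)=\{V\in\mathrm{En}(\mathcal F):\mathcal F_V\text{ constant}\}$; $\mathcal F_V\sim\mathcal G_V$ iff $\mathcal F_V(\mathbf x\mathbf y)=\mathcal G_V(\mathbf x\mathbf z)$ for all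 $\mathbf x\in\mathrm{Ran}(PA^{\mathcal F}_V\cap PA^{\mathcal G}_V)$, $\mathbf y\in\mathrm{Ran}(PA^{\mathcal F}_V\setminus PA^{\mathcal G}_V)$, $\mathbf z\in\mathrm{Ran}(PA^{\mathcal G}_V\setminus PA^{\mathcal F}_V)$; $\mathcal F\sim\mathcal G$ iff $\mathrm{En}(\mathcal F)\setminus\mathrm{Cn}(\mathcal F)=\mathrm{En}(\mathcal G)\setminus\mathrm{Cn}(\mathcal G)$ and $\mathcal F_V\sim\mathcal G_V$ for each such $V$. Nonempty causal teams $(T^-,\mathcal F)\approx(S^-,\mathcal G)$ iff $T^-=S^-$ and $\mathcal F\sim\mathcal G$. Generalized: $T^{\mathcal F}=\{(s,\mathcal G)\in T:\mathcal G\sim\mathcal F\}$ and $S\approx T$ iff $(S^{\mathcal F})^-=(T^{\mathcal F})^-$ for all $\mathcal F\in\mathbb F_\sigma$. *)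

theory Defs
  imports Main
begin

record ('v, 'a) signature =
  sDom :: "'v set"
  sRan :: "'v \<Rightarrow> 'a set"

definition signature_ok :: "('v, 'a) signature \<Rightarrow> bool" where
  "signature_ok \<sigma> \<longleftrightarrow> finite (sDom \<sigma>) \<and> sDom \<sigma> \<noteq> {} \<and>
     (\<forall>X\<in>sDom \<sigma>. finite (sRan \<sigma> X) \<and> sRan \<sigma> X \<noteq> {})"

type_synonym ('v, 'a) assignment = "'v \<Rightarrow> 'a"

text \<open>The set of assignments A_sigma (canonical: undefined outside Dom).\<close>
definition assignments :: "('v, 'a) signature \<Rightarrow> ('v, 'a) assignment set" where
  "assignments \<sigma> = {s. (\<forall>X\<in>sDom \<sigma>. s X \<in> sRan \<sigma> X) \<and> (\<forall>X. X \<notin> sDom \<sigma> \<longrightarrow> s X = undefined)}"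

text \<open>Fn F V is the function F_V, represented as acting on assignments; well-formedness
  forces it to depend only on the parents and to be undefined outside Ran(PA_V).\<close>
record ('v, 'a) sysf =
  En :: "'v set"
  PA :: "'v \<Rightarrow> 'v set"
  Fn :: "'v \<Rightarrow> ('v, 'a) assignment \<Rightarrow> 'a"

definition Ex :: "('v, 'a) signature \<Rightarrow> ('v, 'a) sysf \<Rightarrow> 'v set" where
  "Ex \<sigma> F = sDom \<sigma> - En F"

definition in_ran_on :: "('v, 'a) signature \<Rightarrow> 'v set \<Rightarrow> ('v, 'a) assignment \<Rightarrow> bool" where
  "in_ran_on \<sigma> A s \<longleftrightarrow> (\<forall>X\<in>A. s X \<in> sRan \<sigma> X)"

definition parent_rel :: "('v, 'a) sysf \<Rightarrow> ('v \<times> 'v) set" where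
  "parent_rel F = {(P, V). V \<in> En F \<and> P \<in> PA F V}"

definition sysf_ok :: "('v, 'a) signature \<Rightarrow> ('v, 'a) sysf \<Rightarrow> bool" where
  "sysf_ok \<sigma> F \<longleftrightarrow>
     En F \<subseteq> sDom \<sigma> \<and>
     (\<forall>V\<in>En F. PA F V \<subseteq> sDom \<sigma> - {V}) \<and>
     (\<forall>V. V \<notin> En F \<longrightarrow> PA F V = {} \<and> Fn F V = (\<lambda>_. undefined)) \<and>
     (\<forall>V\<in>En F. \<forall>s. in_ran_on \<sigma> (PA F V) s \<longrightarrow> Fn F V s \<in> sRan \<sigma> V) \<and>
     (\<forall>V\<in>En F. \<forall>s s'. (\<forall>X\<in>PA F V. s X = s' X) \<longrightarrow> Fn F V s = Fn F V s') \<and>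
     (\<forall>V\<in>En F. \<forall>s. \<not> in_ran_on \<sigma> (PA F V) s \<longrightarrow> Fn F V s = undefined) \<and>
     acyclic (parent_rel F)"

definition compatible :: "('v, 'a) sysf \<Rightarrow> ('v, 'a) assignment \<Rightarrow> bool" where
  "compatible F s \<longleftrightarrow> (\<forall>V\<in>En F. s V = Fn F V s)"

definition compat_pairs :: "('v, 'a) signature \<Rightarrow> (('v, 'a) assignment \<times> ('v, 'a) sysf) set" where
  "compat_pairs \<sigma> = {(s, F). sysf_ok \<sigma> F \<and> s \<in> assignments \<sigma> \<and> compatible F s}"

type_synonym ('v, 'a) interv = "('v \<times> 'a) list"

definition consistent :: "('v, 'a) interv \<Rightarrow> bool" where
  "consistent xs \<longleftrightarrow> (\<forall>(X, x)\<in>set xs. \<forall>(X', x')\<in>set xs. X = X' \<longrightarrow> x = x')"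

definition ivars :: "('v, 'a) interv \<Rightarrow> 'v set" where
  "ivars xs = fst ` set xs"

definition interv_sys :: "('v, 'a) sysf \<Rightarrow> ('v, 'a) interv \<Rightarrow> ('v, 'a) sysf" where
  "interv_sys F xs =
     \<lparr> En = En F - ivars xs,
       PA = (\<lambda>V. if V \<in> En F - ivars xs then PA F V else {}),
       Fn = (\<lambda>V. if V \<in> En F - ivars xs then Fn F V else (\<lambda>_. undefined)) \<rparr>"

text \<open>s^F_{X=x}: the unique assignment with X_i = x_i, agreeing with s on the exogenous
  non-intervened variables (and outside Dom), and satisfying the equations of F on the
  endogenous non-intervened variables (unique by recursiveness of F).\<close>
definition interv_asg :: "('v, 'a) sysf \<Rightarrow> ('v, 'a) interv \<Rightarrow> ('v, 'a) assignment \<Rightarrow> ('v, 'a) assignment" where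
  "interv_asg F xs s = (THE t.
      (\<forall>(X, x)\<in>set xs. t X = x) \<and>
      (\<forall>V. V \<notin> ivars xs \<and> V \<notin> En F \<longrightarrow> t V = s V) \<and>
      (\<forall>V. V \<in> En F \<and> V \<notin> ivars xs \<longrightarrow> t V = Fn F V t))"

datatype ('v, 'a) fm =
    Eq 'v 'a
  | Dep "'v list" 'v
  | Neg "('v, 'a) fm"
  | And "('v, 'a) fm" "('v, 'a) fm"
  | Or "('v, 'a) fm" "('v, 'a) fm"
  | GOr "('v, 'a) fm" "('v, 'a) fm"
  | Cf "('v, 'a) interv" "('v, 'a) fm"

fun is_CO :: "('v, 'a) fm \<Rightarrow> bool" where
  "is_CO (Eq X x) = True"
| "is_CO (Dep Xs Y) = False"
| "is_CO (Neg a) = is_CO a"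
| "is_CO (And a b) = (is_CO a \<and> is_CO b)"
| "is_CO (Or a b) = (is_CO a \<and> is_CO b)"
| "is_CO (GOr a b) = False"
| "is_CO (Cf xs a) = is_CO a"

fun is_COsq :: "('v, 'a) fm \<Rightarrow> bool" where
  "is_COsq (Eq X x) = True"
| "is_COsq (Dep Xs Y) = False"
| "is_COsq (Neg a) = is_CO a"
| "is_COsq (And a b) = (is_COsq a \<and> is_COsq b)"
| "is_COsq (Or a b) = (is_COsq a \<and> is_COsq b)"
| "is_COsq (GOr a b) = (is_COsq a \<and> is_COsq b)"
| "is_COsq (Cf xs a) = is_COsq a"

fun is_COD :: "('v, 'a) fm \<Rightarrow> bool" where
  "is_COD (Eq X x) = True"
| "is_COD (Dep Xs Y) = True"
| "is_COD (Neg a) = is_CO a"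
| "is_COD (And a b) = (is_COD a \<and> is_COD b)"
| "is_COD (Or a b) = (is_COD a \<and> is_COD b)"
| "is_COD (GOr a b) = False"
| "is_COD (Cf xs a) = is_COD a"

fun wff :: "('v, 'a) signature \<Rightarrow> ('v, 'a) fm \<Rightarrow> bool" where
  "wff \<sigma> (Eq X x) = (X \<in> sDom \<sigma> \<and> x \<in> sRan \<sigma> X)"
| "wff \<sigma> (Dep Xs Y) = (set Xs \<subseteq> sDom \<sigma> \<and> Y \<in> sDom \<sigma>)"
| "wff \<sigma> (Neg a) = wff \<sigma> a"
| "wff \<sigma> (And a b) = (wff \<sigma> a \<and> wff \<sigma> b)"
| "wff \<sigma> (Or a b) = (wff \<sigma> a \<and> wff \<sigma> b)"
| "wff \<sigma> (GOr a b) = (wff \<sigma> a \<and> wff \<sigma> b)"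
| "wff \<sigma> (Cf xs a) = (xs \<noteq> [] \<and> (\<forall>(X, x)\<in>set xs. X \<in> sDom \<sigma> \<and> x \<in> sRan \<sigma> X) \<and> wff \<sigma> a)"

type_synonym ('v, 'a) cteam = "('v, 'a) assignment set \<times> ('v, 'a) sysf"

definition causal_team :: "('v, 'a) signature \<Rightarrow> ('v, 'a) cteam \<Rightarrow> bool" where
  "causal_team \<sigma> T \<longleftrightarrow> sysf_ok \<sigma> (snd T) \<and> fst T \<subseteq> assignments \<sigma> \<and>
     (\<forall>s\<in>fst T. compatible (snd T) s)"

primrec csat :: "('v, 'a) cteam \<Rightarrow> ('v, 'a) fm \<Rightarrow> bool" where
  "csat T (Eq X x) = (\<forall>s\<in>fst T. s X = x)"
| "csat T (Dep Xs Y) = (\<forall>s\<in>fst T. \<forall>s'\<in>fst T. (\<forall>X\<in>set Xs. s X = s' X) \<longrightarrow> s Y = s' Y)"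
| "csat T (Neg a) = (\<forall>s\<in>fst T. \<not> csat ({s}, snd T) a)"
| "csat T (And a b) = (csat T a \<and> csat T b)"
| "csat T (Or a b) = (\<exists>T1 T2. T1 \<subseteq> fst T \<and> T2 \<subseteq> fst T \<and> T1 \<union> T2 = fst T \<and>
                          csat (T1, snd T) a \<and> csat (T2, snd T) b)"
| "csat T (GOr a b) = (csat T a \<or> csat T b)"
| "csat T (Cf xs a) = (\<not> consistent xs \<or>
      csat (interv_asg (snd T) xs ` fst T, interv_sys (snd T) xs) a)"

type_synonym ('v, 'a) gteam = "(('v, 'a) assignment \<times> ('v, 'a) sysf) set"

definition gen_team :: "('v, 'a) signature \<Rightarrow> ('v, 'a) gteam \<Rightarrow> bool" where
  "gen_team \<sigma> T \<longleftrightarrow> T \<subseteq> compat_pairs \<sigma>"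

definition gteam_interv :: "('v, 'a) interv \<Rightarrow> ('v, 'a) gteam \<Rightarrow> ('v, 'a) gteam" where
  "gteam_interv xs T = (\<lambda>(s, F). (interv_asg F xs s, interv_sys F xs)) ` T"

primrec gsat :: "('v, 'a) gteam \<Rightarrow> ('v, 'a) fm \<Rightarrow> bool" where
  "gsat T (Eq X x) = (\<forall>(s, F)\<in>T. s X = x)"
| "gsat T (Dep Xs Y) = (\<forall>(s, F)\<in>T. \<forall>(s', F')\<in>T. (\<forall>X\<in>set Xs. s X = s' X) \<longrightarrow> s Y = s' Y)"
| "gsat T (Neg a) = (\<forall>p\<in>T. \<not> gsat {p} a)"
| "gsat T (And a b) = (gsat T a \<and> gsat T b)"
| "gsat T (Or a b) = (\<exists>T1 T2. T = T1 \<union> T2 \<and> gsat T1 a \<and> gsat T2 b)"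
| "gsat T (GOr a b) = (gsat T a \<or> gsat T b)"
| "gsat T (Cf xs a) = (\<not> consistent xs \<or> gsat (gteam_interv xs T) a)"

definition Cn :: "('v, 'a) signature \<Rightarrow> ('v, 'a) sysf \<Rightarrow> 'v set" where
  "Cn \<sigma> F = {V\<in>En F. \<forall>s\<in>assignments \<sigma>. \<forall>s'\<in>assignments \<sigma>. Fn F V s = Fn F V s'}"

text \<open>F_V ~ G_V: F_V(x y) = G_V(x z) for all x on the common parents and arbitrary y, z on the
  private parents; i.e. for assignments agreeing on the common parents.\<close>
definition fun_sim :: "('v, 'a) signature \<Rightarrow> ('v, 'a) sysf \<Rightarrow> ('v, 'a) sysf \<Rightarrow> 'v \<Rightarrow> bool" where
  "fun_sim \<sigma> F G V \<longleftrightarrow>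
     (\<forall>s\<in>assignments \<sigma>. \<forall>s'\<in>assignments \<sigma>.
        (\<forall>X\<in>PA F V \<inter> PA G V. s X = s' X) \<longrightarrow> Fn F V s = Fn G V s')"

definition sys_sim :: "('v, 'a) signature \<Rightarrow> ('v, 'a) sysf \<Rightarrow> ('v, 'a) sysf \<Rightarrow> bool" where
  "sys_sim \<sigma> F G \<longleftrightarrow> En F - Cn \<sigma> F = En G - Cn \<sigma> G \<and>
     (\<forall>V\<in>En F - Cn \<sigma> F. fun_sim \<sigma> F G V)"

definition cteam_approx :: "('v, 'a) signature \<Rightarrow> ('v, 'a) cteam \<Rightarrow> ('v, 'a) cteam \<Rightarrow> bool" where
  "cteam_approx \<sigma> T S \<longleftrightarrow>
     (fst T = {} \<and> fst S = {}) \<or>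
     (fst T \<noteq> {} \<and> fst S \<noteq> {} \<and> fst T = fst S \<and> sys_sim \<sigma> (snd T) (snd S))"

definition gteam_restr :: "('v, 'a) signature \<Rightarrow> ('v, 'a) gteam \<Rightarrow> ('v, 'a) sysf \<Rightarrow> ('v, 'a) gteam" where
  "gteam_restr \<sigma> T F = {(s, G)\<in>T. sys_sim \<sigma> G F}"

definition gteam_approx :: "('v, 'a) signature \<Rightarrow> ('v, 'a) gteam \<Rightarrow> ('v, 'a) gteam \<Rightarrow> bool" where
  "gteam_approx \<sigma> S T \<longleftrightarrow>
     (\<forall>F. sysf_ok \<sigma> F \<longrightarrow> fst ` gteam_restr \<sigma> S F = fst ` gteam_restr \<sigma> T F)"

end

theory Submission imports Defs begin

definition ivals :: "('v, 'a) interv \<Rightarrow> 'v \<Rightarrow> 'a" where "ivals xs V = the (map_of xs V)"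

definition conds where
 "conds F xs s t \<longleftrightarrow> (\<forall>(X, x)\<in>set xs. t X = x) \<and>
      (\<forall>V. V \<notin> ivars xs \<and> V \<notin> En F \<longrightarrow> t V = s V) \<and>
      (\<forall>V. V \<in> En F \<and> V \<notin> ivars xs \<longrightarrow> t V = Fn F V t)"

lemma interv_asg_conds: "interv_asg F xs s = (THE t. conds F xs s t)"
  unfolding interv_asg_def conds_def by simp

lemma sysf_local: "sysf_ok \<sigma> F \<Longrightarrow> V \<in> En F \<Longrightarrow> \<forall>X\<in>PA F V. s X = s' X \<Longrightarrow> Fn F V s = Fn F V s'"
  unfolding sysf_ok_def by blast

lemma wf_parent:
  assumes a: "signature_ok \<sigma>" and b: "sysf_ok \<sigma> F" shows "wf (parent_rel F)"
proof -
  have "parent_rel F \<subseteq> sDom \<sigma> \<times> sDom \<sigma>" using b unfolding sysf_ok_def parent_rel_def by auto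
  hence "finite (parent_rel F)" using a unfolding signature_ok_def by (meson finite_SigmaI finite_subset)
  thus ?thesis using b finite_acyclic_wf sysf_ok_def by blast
qed

lemma conds_unique:
  assumes "wf (parent_rel F)" "sysf_ok \<sigma> F" "conds F xs s t1" "conds F xs s t2"
  shows "t1 = t2"
proof
  fix V show "t1 V = t2 V"
    using assms(1)
  proof (induction V rule: wf_induct_rule)
    case (less V)
    show ?case
    proof (cases "V \<in> ivars xs")
      case True then obtain x where "(V,x) \<in> set xs" unfolding ivars_def by force
      then show ?thesis using assms(3,4) unfolding conds_def by auto
    next
      case False
      show ?thesis
      proof (cases "V \<in> En F")
        case True
        have "\<forall>X\<in>PA F V. t1 X = t2 X" using less True unfolding parent_rel_def by auto
        hence "Fn F V t1 = Fn F V t2" using sysf_local[OF assms(2) True] by blast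
        then show ?thesis using assms(3,4) False True unfolding conds_def by auto
      next
        case False2: False
        then show ?thesis using assms(3,4) False unfolding conds_def by auto
      qed
    qed
  qed
qed

definition H where "H F xs s = (\<lambda>g V. if V \<in> ivars xs then ivals xs V else if V \<in> En F then Fn F V g else s V)"

lemma wfrec_H:
  assumes "wf (parent_rel F)" "sysf_ok \<sigma> F"
  shows "wfrec (parent_rel F) (H F xs s) = H F xs s (wfrec (parent_rel F) (H F xs s))"
proof (rule wfrec_def_adm[OF Pure.reflexive assms(1)])
  show "adm_wf (parent_rel F) (H F xs s)"
    unfolding adm_wf_def H_def
  proof (intro allI impI)
    fix f g :: "'a \<Rightarrow> 'b" and x
    assume h: "\<forall>z. (z, x) \<in> parent_rel F \<longrightarrow> f z = g z"
    show "(if x \<in> ivars xs then ivals xs x else if x \<in> En F then Fn F x f else s x) =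
          (if x \<in> ivars xs then ivals xs x else if x \<in> En F then Fn F x g else s x)"
    proof (cases "x \<in> En F")
      case True
      have "\<forall>X\<in>PA F x. f X = g X" using h True unfolding parent_rel_def by auto
      then show ?thesis using sysf_local[OF assms(2) True] by auto
    qed simp
  qed
qed

lemma conds_exists:
  assumes "wf (parent_rel F)" "sysf_ok \<sigma> F" "consistent xs"
  shows "conds F xs s (wfrec (parent_rel F) (H F xs s))"
proof -
  define t where "t = wfrec (parent_rel F) (H F xs s)"
  have t: "t = H F xs s t" using wfrec_H[OF assms(1,2)] unfolding t_def .
  have tV: "t V = (if V \<in> ivars xs then ivals xs V else if V \<in> En F then Fn F V t else s V)" for V
    by (subst t) (simp only: H_def)
  have "t X = x" if xx: "(X, x) \<in> set xs" for X x
  proof -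
    have iv: "X \<in> ivars xs" using xx unfolding ivars_def by force
    have "map_of xs X \<noteq> None" using iv unfolding ivars_def by (simp add: map_of_eq_None_iff)
    then obtain y where y: "map_of xs X = Some y" by blast
    have "(X, y) \<in> set xs" using y by (rule map_of_SomeD)
    then have "y = x" using assms(3) xx unfolding consistent_def by blast
    have "t X = ivals xs X" using tV[of X] iv by simp
    also have "\<dots> = y" unfolding ivals_def y by simp
    finally show ?thesis using \<open>y = x\<close> by simp
  qed
  moreover have "\<forall>V. V \<notin> ivars xs \<and> V \<notin> En F \<longrightarrow> t V = s V" using tV by simp
  moreover have "\<forall>V. V \<in> En F \<and> V \<notin> ivars xs \<longrightarrow> t V = Fn F V t" using tV by simp
  ultimately show ?thesis unfolding conds_def t_def[symmetric] by blast
qed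

definition xsok :: "('v, 'a) signature \<Rightarrow> ('v, 'a) interv \<Rightarrow> bool" where
  "xsok \<sigma> xs \<longleftrightarrow> (\<forall>(X, x)\<in>set xs. X \<in> sDom \<sigma> \<and> x \<in> sRan \<sigma> X)"

lemma interv_asg_cond:
  assumes "signature_ok \<sigma>" "sysf_ok \<sigma> F" "consistent xs"
  shows "conds F xs s (interv_asg F xs s)"
proof -
  have w: "wf (parent_rel F)" using wf_parent assms by blast
  have "\<exists>!t. conds F xs s t" using conds_exists[OF w assms(2,3)] conds_unique[OF w assms(2)] by blast
  thus ?thesis unfolding interv_asg_conds by (rule theI')
qed

lemma interv_asg_unique:
  assumes "signature_ok \<sigma>" "sysf_ok \<sigma> F" "consistent xs" "conds F xs s t"
  shows "interv_asg F xs s = t"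
  using conds_unique[OF wf_parent[OF assms(1,2)] assms(2) interv_asg_cond[OF assms(1-3)] assms(4)] .

lemma interv_asg_assign:
  assumes sig: "signature_ok \<sigma>" and F: "sysf_ok \<sigma> F" and c: "consistent xs" and xo: "xsok \<sigma> xs"
    and s: "s \<in> assignments \<sigma>"
  shows "interv_asg F xs s \<in> assignments \<sigma>"
proof -
  define t where "t = interv_asg F xs s"
  have ct: "conds F xs s t" using interv_asg_cond[OF sig F c] t_def by simp
  have ivD: "ivars xs \<subseteq> sDom \<sigma>" using xo unfolding xsok_def ivars_def by auto
  have EnD: "En F \<subseteq> sDom \<sigma>" using F unfolding sysf_ok_def by auto
  have "V \<in> sDom \<sigma> \<longrightarrow> t V \<in> sRan \<sigma> V" for V
    using wf_parent[OF sig F]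
  proof (induction V rule: wf_induct_rule)
    case (less V)
    show ?case
    proof (cases "V \<in> ivars xs")
      case True then obtain x where x: "(V,x) \<in> set xs" unfolding ivars_def by force
      then have "t V = x" using ct unfolding conds_def by auto
      then show ?thesis using x xo unfolding xsok_def by auto
    next
      case False
      show ?thesis
      proof (cases "V \<in> En F")
        case True
        have "PA F V \<subseteq> sDom \<sigma>" using F True unfolding sysf_ok_def by blast
        hence "in_ran_on \<sigma> (PA F V) t" using less True unfolding in_ran_on_def parent_rel_def by auto
        hence "Fn F V t \<in> sRan \<sigma> V" using F True unfolding sysf_ok_def by blast
        then show ?thesis using ct False True unfolding conds_def by auto
      next
        case False2: False
        then show ?thesis using ct False s unfolding conds_def assignments_def by auto
      qed
    qed
  qed
  moreover have "V \<notin> sDom \<sigma> \<Longrightarrow> t V = undefined" for V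
    using ct ivD EnD s unfolding conds_def assignments_def by auto
  ultimately show ?thesis unfolding assignments_def t_def[symmetric] by auto
qed

lemma interv_compat:
  assumes "signature_ok \<sigma>" "sysf_ok \<sigma> F" "consistent xs"
  shows "compatible (interv_sys F xs) (interv_asg F xs s)"
  using interv_asg_cond[OF assms] unfolding conds_def compatible_def interv_sys_def by auto

lemma interv_sysf_ok:
  assumes "sysf_ok \<sigma> F"
  shows "sysf_ok \<sigma> (interv_sys F xs)"
proof -
  have "parent_rel (interv_sys F xs) \<subseteq> parent_rel F"
    unfolding parent_rel_def interv_sys_def by auto
  hence "acyclic (parent_rel (interv_sys F xs))" using assms acyclic_subset unfolding sysf_ok_def by blast
  moreover have "En (interv_sys F xs) \<subseteq> sDom \<sigma> \<and>
     (\<forall>V\<in>En (interv_sys F xs). PA (interv_sys F xs) V \<subseteq> sDom \<sigma> - {V}) \<and>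
     (\<forall>V. V \<notin> En (interv_sys F xs) \<longrightarrow> PA (interv_sys F xs) V = {} \<and> Fn (interv_sys F xs) V = (\<lambda>_. undefined)) \<and>
     (\<forall>V\<in>En (interv_sys F xs). \<forall>s. in_ran_on \<sigma> (PA (interv_sys F xs) V) s \<longrightarrow> Fn (interv_sys F xs) V s \<in> sRan \<sigma> V) \<and>
     (\<forall>V\<in>En (interv_sys F xs). \<forall>s s'. (\<forall>X\<in>PA (interv_sys F xs) V. s X = s' X) \<longrightarrow> Fn (interv_sys F xs) V s = Fn (interv_sys F xs) V s') \<and>
     (\<forall>V\<in>En (interv_sys F xs). \<forall>s. \<not> in_ran_on \<sigma> (PA (interv_sys F xs) V) s \<longrightarrow> Fn (interv_sys F xs) V s = undefined)"
    using assms unfolding sysf_ok_def interv_sys_def by auto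
  ultimately show ?thesis unfolding sysf_ok_def by blast
qed

lemma Cn_interv: "Cn \<sigma> (interv_sys F xs) = Cn \<sigma> F - ivars xs"
  unfolding Cn_def interv_sys_def by auto

lemma sim_interv:
  assumes "sys_sim \<sigma> F G"
  shows "sys_sim \<sigma> (interv_sys F xs) (interv_sys G xs)"
proof -
  have e: "En (interv_sys F xs) - Cn \<sigma> (interv_sys F xs) = (En F - Cn \<sigma> F) - ivars xs" for F :: "('a,'b) sysf"
    unfolding Cn_interv by (auto simp: interv_sys_def)
  show ?thesis using assms unfolding sys_sim_def e
    by (auto simp: fun_sim_def interv_sys_def)
qed

lemma interv_asg_sim:
  assumes sig: "signature_ok \<sigma>" and F: "sysf_ok \<sigma> F" and G: "sysf_ok \<sigma> G" and sim: "sys_sim \<sigma> F G"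
    and c: "consistent xs" and xo: "xsok \<sigma> xs" and s: "s \<in> assignments \<sigma>"
    and cF: "compatible F s" and cG: "compatible G s"
  shows "interv_asg F xs s = interv_asg G xs s"
proof -
  define t where "t = interv_asg F xs s"
  have ct: "conds F xs s t" using interv_asg_cond[OF sig F c] t_def by simp
  have ct1: "\<forall>(X, x)\<in>set xs. t X = x" and ct2: "\<And>V. V \<notin> ivars xs \<Longrightarrow> V \<notin> En F \<Longrightarrow> t V = s V"
    and ct3: "\<And>V. V \<in> En F \<Longrightarrow> V \<notin> ivars xs \<Longrightarrow> t V = Fn F V t"
    using ct unfolding conds_def by simp_all
  have ta: "t \<in> assignments \<sigma>" using interv_asg_assign[OF sig F c xo s] t_def by simp
  have cFs: "\<And>V. V \<in> En F \<Longrightarrow> s V = Fn F V s" using cF unfolding compatible_def by blast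
  have cGs: "\<And>V. V \<in> En G \<Longrightarrow> s V = Fn G V s" using cG unfolding compatible_def by blast
  have CnF: "t V = s V" if "V \<in> Cn \<sigma> F" "V \<notin> ivars xs" for V
  proof -
    have VE: "V \<in> En F" and cst: "\<forall>u\<in>assignments \<sigma>. \<forall>u'\<in>assignments \<sigma>. Fn F V u = Fn F V u'"
      using that(1) unfolding Cn_def by blast+
    have "t V = Fn F V t" using ct3[OF VE that(2)] .
    also have "\<dots> = Fn F V s" using cst ta s by blast
    also have "\<dots> = s V" using cFs[OF VE] by simp
    finally show ?thesis .
  qed
  have CnG: "Fn G V t = s V" if "V \<in> Cn \<sigma> G" for V
  proof -
    have VE: "V \<in> En G" and cst: "\<forall>u\<in>assignments \<sigma>. \<forall>u'\<in>assignments \<sigma>. Fn G V u = Fn G V u'"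
      using that(1) unfolding Cn_def by blast+
    have "Fn G V t = Fn G V s" using cst ta s by blast
    also have "\<dots> = s V" using cGs[OF VE] by simp
    finally show ?thesis .
  qed
  have eq: "En F - Cn \<sigma> F = En G - Cn \<sigma> G" using sim unfolding sys_sim_def by blast
  have "conds G xs s t"
    unfolding conds_def
  proof (intro conjI allI impI)
    show "\<forall>(X, x)\<in>set xs. t X = x" using ct1 .
  next
    fix V assume V: "V \<notin> ivars xs \<and> V \<notin> En G"
    show "t V = s V"
    proof (cases "V \<in> En F")
      case True
      then have "V \<in> Cn \<sigma> F" using V eq by blast
      then show ?thesis using CnF V by blast
    next
      case False
      then show ?thesis using ct2 V by blast
    qed
  next
    fix V assume V: "V \<in> En G \<and> V \<notin> ivars xs"
    show "t V = Fn G V t"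
    proof (cases "V \<in> Cn \<sigma> G")
      case True
      have "t V = s V"
      proof (cases "V \<in> En F")
        case True
        then have "V \<in> Cn \<sigma> F" using V eq \<open>V \<in> Cn \<sigma> G\<close> by blast
        then show ?thesis using CnF V by blast
      next
        case False
        then show ?thesis using ct2 V by blast
      qed
      then show ?thesis using CnG[OF True] by simp
    next
      case False
      then have VF: "V \<in> En F - Cn \<sigma> F" using V eq by blast
      then have "fun_sim \<sigma> F G V" using sim unfolding sys_sim_def by blast
      then have "Fn F V t = Fn G V t" using ta unfolding fun_sim_def by blast
      moreover have "t V = Fn F V t" using ct3 VF V by blast
      ultimately show ?thesis by simp
    qed
  qed
  then show ?thesis using interv_asg_unique[OF sig G c] t_def by simp
qed

lemma csat_empty: "csat ({}, F) \<phi>"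
proof (induction \<phi> arbitrary: F)
  case (Or a b) then show ?case by force
qed auto

lemma ct_sub: "causal_team \<sigma> (A, F) \<Longrightarrow> B \<subseteq> A \<Longrightarrow> causal_team \<sigma> (B, F)"
  unfolding causal_team_def by auto

lemma causal_main:
  assumes sig: "signature_ok \<sigma>"
  shows "wff \<sigma> \<phi> \<Longrightarrow> causal_team \<sigma> (A, F) \<Longrightarrow> causal_team \<sigma> (A, G) \<Longrightarrow> sys_sim \<sigma> F G
     \<Longrightarrow> csat (A, F) \<phi> = csat (A, G) \<phi>"
proof (induction \<phi> arbitrary: A F G)
  case (Neg a)
  have "csat ({s}, F) a = csat ({s}, G) a" if "s \<in> A" for s
    using Neg.IH[of "{s}" F G] Neg.prems ct_sub[of \<sigma> A _ "{s}"] that by auto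
  then show ?case by simp
next
  case (And a b) then show ?case by simp
next
  case (Or a b)
  have "csat (T1, F) a = csat (T1, G) a" "csat (T1, F) b = csat (T1, G) b" if "T1 \<subseteq> A" for T1
    using Or.IH[of T1 F G] Or.prems ct_sub[of \<sigma> A _ T1] that by auto
  then show ?case by simp blast
next
  case (GOr a b) then show ?case by simp
next
  case (Cf xs a)
  show ?case
  proof (cases "consistent xs")
    case False then show ?thesis by simp
  next
    case c: True
    have F: "sysf_ok \<sigma> F" and G: "sysf_ok \<sigma> G" using Cf.prems unfolding causal_team_def by auto
    have xo: "xsok \<sigma> xs" using Cf.prems unfolding xsok_def by auto
    have img: "interv_asg F xs ` A = interv_asg G xs ` A"
    proof (rule image_cong[OF refl])
      fix s assume "s \<in> A"
      then show "interv_asg F xs s = interv_asg G xs s"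
        using interv_asg_sim[OF sig F G _ c xo] Cf.prems unfolding causal_team_def by auto
    qed
    have ctF: "causal_team \<sigma> (interv_asg F xs ` A, interv_sys F xs)"
      using interv_sysf_ok[OF F] interv_asg_assign[OF sig F c xo] interv_compat[OF sig F c] Cf.prems
      unfolding causal_team_def by auto
    have ctG: "causal_team \<sigma> (interv_asg G xs ` A, interv_sys G xs)"
      using interv_sysf_ok[OF G] interv_asg_assign[OF sig G c xo] interv_compat[OF sig G c] Cf.prems
      unfolding causal_team_def by auto
    have "csat (interv_asg F xs ` A, interv_sys F xs) a = csat (interv_asg F xs ` A, interv_sys G xs) a"
      using Cf.IH[OF _ ctF ctG[folded img] sim_interv[OF Cf.prems(4)]] Cf.prems(1) by simp
    then show ?thesis using img by simp
  qed
qed simp_all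

lemma sim_refl: "sysf_ok \<sigma> F \<Longrightarrow> sys_sim \<sigma> F F"
  unfolding sys_sim_def fun_sim_def using sysf_local by fastforce

lemma sim_sym: "sys_sim \<sigma> F G \<Longrightarrow> sys_sim \<sigma> G F"
  unfolding sys_sim_def fun_sim_def by (metis Int_commute)

lemma sim_trans:
  assumes "sys_sim \<sigma> F G" "sys_sim \<sigma> G K" shows "sys_sim \<sigma> F K"
proof -
  have e: "En F - Cn \<sigma> F = En K - Cn \<sigma> K" using assms unfolding sys_sim_def by blast
  have "fun_sim \<sigma> F K V" if V: "V \<in> En F - Cn \<sigma> F" for V
  proof -
    have f1: "fun_sim \<sigma> F G V" and f2: "fun_sim \<sigma> G K V" using assms V unfolding sys_sim_def by auto
    show ?thesis unfolding fun_sim_def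
    proof (intro ballI impI)
      fix s s' assume s: "s \<in> assignments \<sigma>" and s': "s' \<in> assignments \<sigma>"
        and ag: "\<forall>X\<in>PA F V \<inter> PA K V. s X = s' X"
      define u where "u = (\<lambda>X. if X \<in> PA F V then s X else s' X)"
      have u: "u \<in> assignments \<sigma>" using s s' unfolding assignments_def u_def by auto
      have a1: "\<forall>X\<in>PA F V \<inter> PA G V. s X = u X" unfolding u_def by simp
      have a2: "\<forall>X\<in>PA G V \<inter> PA K V. u X = s' X" using ag unfolding u_def by auto
      have "Fn F V s = Fn G V u" using f1 s u a1 unfolding fun_sim_def by blast
      also have "\<dots> = Fn K V s'" using f2 u s' a2 unfolding fun_sim_def by blast
      finally show "Fn F V s = Fn K V s'" .
    qed
  qed
  then show ?thesis using e unfolding sys_sim_def by blast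
qed

lemma approx_sym: "gteam_approx \<sigma> S T \<Longrightarrow> gteam_approx \<sigma> T S"
  unfolding gteam_approx_def by metis

lemma approx_ex:
  assumes "gen_team \<sigma> T" "gteam_approx \<sigma> T S" "(s, G) \<in> T"
  shows "\<exists>G'. (s, G') \<in> S \<and> sys_sim \<sigma> G' G"
proof -
  have G: "sysf_ok \<sigma> G" using assms unfolding gen_team_def compat_pairs_def by auto
  have "s \<in> fst ` gteam_restr \<sigma> T G" using assms(3) sim_refl[OF G] unfolding gteam_restr_def by force
  then have "s \<in> fst ` gteam_restr \<sigma> S G" using assms(2) G unfolding gteam_approx_def by blast
  then show ?thesis unfolding gteam_restr_def by force
qed

lemma approx_single:
  assumes "sys_sim \<sigma> G G'" shows "gteam_approx \<sigma> {(s, G)} {(s, G')}"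
proof -
  have "sys_sim \<sigma> G F \<longleftrightarrow> sys_sim \<sigma> G' F" for F
    using assms sim_trans sim_sym by blast
  then show ?thesis unfolding gteam_approx_def gteam_restr_def by auto
qed

lemma gen_sub: "gen_team \<sigma> T \<Longrightarrow> S \<subseteq> T \<Longrightarrow> gen_team \<sigma> S"
  unfolding gen_team_def by auto

lemma gen_interv:
  assumes sig: "signature_ok \<sigma>" and c: "consistent xs" and xo: "xsok \<sigma> xs" and T: "gen_team \<sigma> T"
  shows "gen_team \<sigma> (gteam_interv xs T)"
  unfolding gen_team_def gteam_interv_def
proof
  fix p assume "p \<in> (\<lambda>(s, F). (interv_asg F xs s, interv_sys F xs)) ` T"
  then obtain s F where p: "p = (interv_asg F xs s, interv_sys F xs)" and sF: "(s, F) \<in> T" by auto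
  have F: "sysf_ok \<sigma> F" and s: "s \<in> assignments \<sigma>" using sF T unfolding gen_team_def compat_pairs_def by auto
  show "p \<in> compat_pairs \<sigma>" unfolding p compat_pairs_def
    using interv_sysf_ok[OF F] interv_asg_assign[OF sig F c xo s] interv_compat[OF sig F c] by auto
qed

lemma approx_interv_sub:
  assumes sig: "signature_ok \<sigma>" and c: "consistent xs" and xo: "xsok \<sigma> xs"
    and T: "gen_team \<sigma> T" and S: "gen_team \<sigma> S" and ap: "gteam_approx \<sigma> T S"
  shows "fst ` gteam_restr \<sigma> (gteam_interv xs T) F0 \<subseteq> fst ` gteam_restr \<sigma> (gteam_interv xs S) F0"
proof
  fix x assume "x \<in> fst ` gteam_restr \<sigma> (gteam_interv xs T) F0"
  then obtain s G where x: "x = interv_asg G xs s" and sG: "(s, G) \<in> T"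
    and sim0: "sys_sim \<sigma> (interv_sys G xs) F0"
    unfolding gteam_restr_def gteam_interv_def by auto
  obtain G' where sG': "(s, G') \<in> S" and sim: "sys_sim \<sigma> G' G" using approx_ex[OF T ap sG] by blast
  have G: "sysf_ok \<sigma> G" "s \<in> assignments \<sigma>" "compatible G s" using sG T unfolding gen_team_def compat_pairs_def by auto
  have G': "sysf_ok \<sigma> G'" "compatible G' s" using sG' S unfolding gen_team_def compat_pairs_def by auto
  have "interv_asg G' xs s = interv_asg G xs s"
    using interv_asg_sim[OF sig G'(1) G(1) sim c xo G(2) G'(2) G(3)] .
  moreover have "sys_sim \<sigma> (interv_sys G' xs) F0" using sim_trans[OF sim_interv[OF sim] sim0] .
  ultimately have "(x, interv_sys G' xs) \<in> gteam_restr \<sigma> (gteam_interv xs S) F0"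
    using sG' x unfolding gteam_restr_def gteam_interv_def by force
  then show "x \<in> fst ` gteam_restr \<sigma> (gteam_interv xs S) F0" by force
qed

lemma gen_main:
  assumes sig: "signature_ok \<sigma>"
  shows "wff \<sigma> \<phi> \<Longrightarrow> gen_team \<sigma> T \<Longrightarrow> gen_team \<sigma> S \<Longrightarrow> gteam_approx \<sigma> T S
     \<Longrightarrow> gsat T \<phi> \<Longrightarrow> gsat S \<phi>"
proof (induction \<phi> arbitrary: T S)
  case (Eq X x)
  show ?case unfolding gsat.simps
  proof (intro ballI, clarify)
    fix s F assume "(s, F) \<in> S"
    then obtain G where "(s, G) \<in> T" using approx_ex[OF Eq.prems(3) approx_sym[OF Eq.prems(4)]] by blast
    then show "s X = x" using Eq.prems(5) by auto
  qed
next
  case (Dep Xs Y)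
  show ?case unfolding gsat.simps
  proof (intro ballI, clarify)
    fix s F s' F' assume "(s, F) \<in> S" "(s', F') \<in> S" "\<forall>X\<in>set Xs. s X = s' X"
    moreover obtain G where "(s, G) \<in> T" using approx_ex[OF Dep.prems(3) approx_sym[OF Dep.prems(4)]] \<open>(s, F) \<in> S\<close> by blast
    moreover obtain G' where "(s', G') \<in> T" using approx_ex[OF Dep.prems(3) approx_sym[OF Dep.prems(4)]] \<open>(s', F') \<in> S\<close> by blast
    ultimately show "s Y = s' Y" using Dep.prems(5) by fastforce
  qed
next
  case (Neg a)
  show ?case unfolding gsat.simps
  proof (intro ballI)
    fix p assume p: "p \<in> S"
    obtain s G' where pe: "p = (s, G')" by fastforce
    obtain G where sG: "(s, G) \<in> T" and sim: "sys_sim \<sigma> G G'"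
      using approx_ex[OF Neg.prems(3) approx_sym[OF Neg.prems(4)]] p pe by blast
    have n: "\<not> gsat {(s, G)} a" using Neg.prems(5) sG by auto
    show "\<not> gsat {p} a"
    proof
      assume "gsat {p} a"
      then have gp: "gsat {(s, G')} a" using pe by simp
      have g1: "gen_team \<sigma> {(s, G')}" using gen_sub[OF Neg.prems(3)] p pe by auto
      have g2: "gen_team \<sigma> {(s, G)}" using gen_sub[OF Neg.prems(2)] sG by auto
      have wa: "wff \<sigma> a" using Neg.prems(1) by simp
      have "gsat {(s, G)} a" using Neg.IH[OF wa g1 g2 approx_single[OF sim_sym[OF sim]] gp] .
      then show False using n by simp
    qed
  qed
next
  case (And a b) then show ?case by simp
next
  case (Or a b)
  obtain T1 T2 where T: "T = T1 \<union> T2" and t1: "gsat T1 a" and t2: "gsat T2 b" using Or.prems(5) by auto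
  define S1 where "S1 = {(s, G')\<in>S. \<exists>G. (s, G) \<in> T1 \<and> sys_sim \<sigma> G G'}"
  define S2 where "S2 = {(s, G')\<in>S. \<exists>G. (s, G) \<in> T2 \<and> sys_sim \<sigma> G G'}"
  have ap: "gteam_approx \<sigma> Ti Si"
    if Si: "Si = {(s, G')\<in>S. \<exists>G. (s, G) \<in> Ti \<and> sys_sim \<sigma> G G'}" and Ti: "Ti \<subseteq> T" for Si Ti
    unfolding gteam_approx_def
  proof (intro allI impI equalityI subsetI)
    fix F x assume F: "sysf_ok \<sigma> F" and x: "x \<in> fst ` gteam_restr \<sigma> Ti F"
    then obtain G where xG: "(x, G) \<in> Ti" and GF: "sys_sim \<sigma> G F" unfolding gteam_restr_def by auto
    have xGT: "(x, G) \<in> T" using xG Ti by blast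
    obtain G' where xS: "(x, G') \<in> S" and GG: "sys_sim \<sigma> G' G" using approx_ex[OF Or.prems(2,4) xGT] by blast
    have "(x, G') \<in> Si" unfolding Si using xS xG sim_sym[OF GG] by blast
    moreover have "sys_sim \<sigma> G' F" using sim_trans[OF GG GF] .
    ultimately have "(x, G') \<in> gteam_restr \<sigma> Si F" unfolding gteam_restr_def by simp
    then show "x \<in> fst ` gteam_restr \<sigma> Si F" by (metis fst_conv image_eqI)
  next
    fix F x assume F: "sysf_ok \<sigma> F" and x: "x \<in> fst ` gteam_restr \<sigma> Si F"
    then obtain G' where "(x, G') \<in> Si" "sys_sim \<sigma> G' F" unfolding gteam_restr_def by auto
    then obtain G where "(x, G) \<in> Ti" "sys_sim \<sigma> G G'" unfolding Si by blast
    then have "(x, G) \<in> gteam_restr \<sigma> Ti F" using sim_trans \<open>sys_sim \<sigma> G' F\<close> unfolding gteam_restr_def by blast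
    then show "x \<in> fst ` gteam_restr \<sigma> Ti F" by (metis fst_conv image_eqI)
  qed
  have wa: "wff \<sigma> a" and wb: "wff \<sigma> b" using Or.prems(1) by simp_all
  have T1s: "T1 \<subseteq> T" and T2s: "T2 \<subseteq> T" unfolding T by (rule Un_upper1, rule Un_upper2)
  have gT1: "gen_team \<sigma> T1" by (rule gen_sub[OF Or.prems(2) T1s])
  have gT2: "gen_team \<sigma> T2" by (rule gen_sub[OF Or.prems(2) T2s])
  have S1s: "S1 \<subseteq> S" and S2s: "S2 \<subseteq> S" unfolding S1_def S2_def by auto
  have gS1: "gen_team \<sigma> S1" by (rule gen_sub[OF Or.prems(3) S1s])
  have gS2: "gen_team \<sigma> S2" by (rule gen_sub[OF Or.prems(3) S2s])
  have g1: "gsat S1 a" using Or.IH(1)[OF wa gT1 gS1 ap[OF S1_def T1s] t1] .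
  have g2: "gsat S2 b" using Or.IH(2)[OF wb gT2 gS2 ap[OF S2_def T2s] t2] .
  have "S = S1 \<union> S2"
  proof
    show "S1 \<union> S2 \<subseteq> S" using S1s S2s by (rule Un_least)
  next
    show "S \<subseteq> S1 \<union> S2"
    proof
      fix p assume pS: "p \<in> S"
      obtain s G' where pe: "p = (s, G')" by fastforce
      have "(s, G') \<in> S" using pS pe by simp
      then obtain G where sG: "(s, G) \<in> T" and GG: "sys_sim \<sigma> G G'"
        using approx_ex[OF Or.prems(3) approx_sym[OF Or.prems(4)]] by blast
      have "(s, G) \<in> T1 \<union> T2" using sG unfolding T .
      then have "(s, G) \<in> T1 \<or> (s, G) \<in> T2" by (rule UnE) simp_all
      then show "p \<in> S1 \<union> S2" using pS pe GG unfolding S1_def S2_def by blast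
    qed
  qed
  then show ?case using g1 g2 by (simp only: gsat.simps) blast
next
  case (GOr a b) then show ?case by auto
next
  case (Cf xs a)
  show ?case
  proof (cases "consistent xs")
    case False then show ?thesis by simp
  next
    case c: True
    have xo: "xsok \<sigma> xs" using Cf.prems unfolding xsok_def by auto
    have apx: "gteam_approx \<sigma> (gteam_interv xs T) (gteam_interv xs S)"
      unfolding gteam_approx_def
    proof (intro allI impI equalityI)
      fix F0 :: "('a, 'b) sysf"
      show "fst ` gteam_restr \<sigma> (gteam_interv xs T) F0 \<subseteq> fst ` gteam_restr \<sigma> (gteam_interv xs S) F0"
        by (rule approx_interv_sub[OF sig c xo Cf.prems(2,3,4)])
      show "fst ` gteam_restr \<sigma> (gteam_interv xs S) F0 \<subseteq> fst ` gteam_restr \<sigma> (gteam_interv xs T) F0"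
        by (rule approx_interv_sub[OF sig c xo Cf.prems(3,2) approx_sym[OF Cf.prems(4)]])
    qed
    have wa: "wff \<sigma> a" using Cf.prems(1) by simp
    have gT: "gsat (gteam_interv xs T) a" using Cf.prems(5) c by simp
    have "gsat (gteam_interv xs S) a"
      by (rule Cf.IH[OF wa gen_interv[OF sig c xo Cf.prems(2)] gen_interv[OF sig c xo Cf.prems(3)] apx gT])
    then show ?thesis by simp
  qed
qed

theorem theorem3p3:
  fixes \<sigma> :: "('v, 'a) signature"
  assumes "signature_ok \<sigma>"
  shows "(\<forall>T S \<phi>. causal_team \<sigma> T \<and> causal_team \<sigma> S \<and> cteam_approx \<sigma> T S \<and>
            wff \<sigma> \<phi> \<and> (is_CO \<phi> \<or> is_COsq \<phi> \<or> is_COD \<phi>)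
            \<longrightarrow> (csat T \<phi> \<longleftrightarrow> csat S \<phi>)) \<and>
         (\<forall>T S \<phi>. gen_team \<sigma> T \<and> gen_team \<sigma> S \<and> gteam_approx \<sigma> T S \<and>
            wff \<sigma> \<phi> \<and> (is_CO \<phi> \<or> is_COsq \<phi> \<or> is_COD \<phi>)
            \<longrightarrow> (gsat T \<phi> \<longleftrightarrow> gsat S \<phi>))"
proof (intro conjI allI impI)
  fix T S :: "('v, 'a) cteam" and \<phi>
  assume h: "causal_team \<sigma> T \<and> causal_team \<sigma> S \<and> cteam_approx \<sigma> T S \<and>
            wff \<sigma> \<phi> \<and> (is_CO \<phi> \<or> is_COsq \<phi> \<or> is_COD \<phi>)"
  obtain A F where T: "T = (A, F)" by fastforce
  obtain B G where S: "S = (B, G)" by fastforce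
  show "csat T \<phi> \<longleftrightarrow> csat S \<phi>"
  proof (cases "A = {}")
    case True
    then have "B = {}" using h T S unfolding cteam_approx_def by auto
    then show ?thesis using True T S csat_empty[of F \<phi>] csat_empty[of G \<phi>] by simp
  next
    case False
    then have "B = A" "sys_sim \<sigma> F G" using h T S unfolding cteam_approx_def by auto
    then show ?thesis using causal_main[OF assms, of \<phi> A F G] h T S by simp
  qed
next
  fix T S :: "('v, 'a) gteam" and \<phi>
  assume h: "gen_team \<sigma> T \<and> gen_team \<sigma> S \<and> gteam_approx \<sigma> T S \<and>
            wff \<sigma> \<phi> \<and> (is_CO \<phi> \<or> is_COsq \<phi> \<or> is_COD \<phi>)"
  then show "gsat T \<phi> \<longleftrightarrow> gsat S \<phi>"
    using gen_main[OF assms, of \<phi> T S] gen_main[OF assms, of \<phi> S T] approx_sym by blast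
qed

end
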